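(* Let $0<\epsilon<1$, $r>0$ be constants, $p_2=\frac{1-\epsilon}{n}$, $p_3=\frac{r}{n\ln n}$, and $K_0=\max\{1,\tfrac{2(9+\epsilon)}{r}\}$. For any given vertex $v_0$ of $\mathbb{G}(n,p_2,p_3)$, $$\Pr\big[|C_{v_0}|\ge K_0\ln n\big]\le n^{I_{\epsilon,r}+o(1)}\qquad(n\to\infty),$$ where $I_{\epsilon,r}=\int_{0}^{\epsilon/r}\big[1-\lambda(\omega)+\ln\lambda(\omega)\big]d\omega=-\frac1r\big[\epsilon-\frac{\epsilon^2}{2}+(1-\epsilon)\ln(1-\epsilon)\big]$ with $\lambda(x)=1-\epsilon+rx$. In particular, if $I_{\epsilon,r}<-1$ then w.h.p. no vertex $v$ has $|C_v|\ge K_0\ln n$.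
   Context: $\mathbb{G}(n,p_2,p_3)$ is the random hypergraph on a vertex set $V$ with $|V|=n$ in which each of the $\binom n2$ possible 2-element edges is present with probability $p_2$ and each of the $\binom n3$ possible 3-element hyperedges is present with probability $p_3$, all independently. Propagation process from a vertex $v$: one maintains a set $\mathcal{Y}_t$ of active vertices and a set $\mathcal{D}_t$ of inactive vertices, with $\mathcal{Y}_0=\{v\}$, $\mathcal{D}_0=\emptyset$; vertices in neither set are unexplored. At time $t=0,1,2,\dots$, while $\mathcal{Y}_t\neq\emptyset$, pick an active vertex $v_t\in\mathcal{Y}_t$ and let $U_t$ be the set of unexplored vertices $u$ such that $\{v_t,u\}$ is a 2-edge or $\{v_t,u,w\}$ is a 3-edge for some $w\in\mathcal{D}_t$; set $\mathcal{Y}_{t+1}=(\mathcal{Y}_t\cup U_t)\setminus\{v_t\}$ and $\mathcal{D}_{t+1}=\mathcal{D}_t\cup\{v_t\}$. The process stops at $T_v=\min\{t:\mathcal{Y}_t=\emptyset\}$, and the propagation component of $v$ is $C_v=\mathcal{D}_{T_v}$, so $|C_v|=T_v$. W.h.p. means with probability tending to 1 as $n\to\infty$. *)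

theory Defs
  imports "HOL-Probability.Probability"
begin

text \<open>Vertex set V = {0..<n}. A hypergraph is given by its edge indicator
  H :: nat set => bool; only 2- and 3-element subsets of V can be edges.\<close>

definition possible_edges :: "nat \<Rightarrow> nat set set" where
  "possible_edges n = {e. e \<subseteq> {..<n} \<and> (card e = 2 \<or> card e = 3)}"

definition random_hypergraph :: "nat \<Rightarrow> real \<Rightarrow> real \<Rightarrow> (nat set \<Rightarrow> bool) pmf" where
  "random_hypergraph n p2 p3 =
     Pi_pmf (possible_edges n) False
       (\<lambda>e. bernoulli_pmf (if card e = 2 then p2 else p3))"

text \<open>One step of the propagation process on state (Y_t, D_t); the active vertex
  picked is the least one (the final set does not depend on the choice).\<close>
definition prop_step :: "nat \<Rightarrow> (nat set \<Rightarrow> bool) \<Rightarrow> nat set \<times> nat set \<Rightarrow> nat set \<times> nat set" where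
  "prop_step n H S =
     (let Y = fst S; D = snd S in
      if Y = {} then (Y, D)
      else let v = Min Y;
               U = {u \<in> {..<n}. u \<notin> Y \<and> u \<notin> D \<and>
                     (H {v, u} \<or> (\<exists>w\<in>D. H {v, u, w}))}
           in ((Y \<union> U) - {v}, insert v D))"

text \<open>The process terminates after at most n steps (each step moves one vertex into D),
  so C_v = D_{T_v} = D_n.\<close>
definition prop_component :: "nat \<Rightarrow> (nat set \<Rightarrow> bool) \<Rightarrow> nat \<Rightarrow> nat set" where
  "prop_component n H v = snd ((prop_step n H ^^ n) ({v}, {}))"

definition I_er :: "real \<Rightarrow> real \<Rightarrow> real" where
  "I_er \<epsilon> r = - (1 / r) * (\<epsilon> - \<epsilon>\<^sup>2 / 2 + (1 - \<epsilon>) * ln (1 - \<epsilon>))"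

end

theory Submission
  imports Defs
begin


definition valid :: "nat \<Rightarrow> nat set \<times> nat set \<Rightarrow> bool" where
  "valid n S \<longleftrightarrow> fst S \<inter> snd S = {} \<and> fst S \<subseteq> {..<n} \<and> snd S \<subseteq> {..<n}"

definition Free :: "nat \<Rightarrow> nat set \<Rightarrow> nat set set" where
  "Free n D = {e \<in> possible_edges n. 2 \<le> card (e - D)}"

definition Ustep :: "nat \<Rightarrow> (nat set \<Rightarrow> bool) \<Rightarrow> nat set \<Rightarrow> nat set \<Rightarrow> nat set" where
  "Ustep n H Y D = {u \<in> {..<n}. u \<notin> Y \<and> u \<notin> D \<and>
                     (H {Min Y, u} \<or> (\<exists>w\<in>D. H {Min Y, u, w}))}"

lemma step_empty: "prop_step n H ({}, D) = ({}, D)"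
  by (simp add: prop_step_def)

lemma step_nonempty: "Y \<noteq> {} \<Longrightarrow> prop_step n H (Y, D) = ((Y \<union> Ustep n H Y D) - {Min Y}, insert (Min Y) D)"
  by (simp add: prop_step_def Ustep_def Let_def)

lemma min_in: "valid n (Y, D) \<Longrightarrow> Y \<noteq> {} \<Longrightarrow> Min Y \<in> Y"
  by (rule Min_in) (auto simp: valid_def intro: finite_subset[OF _ finite_lessThan])

lemma valid_step: "valid n S \<Longrightarrow> valid n (prop_step n H S)"
proof (cases S)
  case (Pair Y D)
  assume v: "valid n S"
  show ?thesis
  proof (cases "Y = {}")
    case True then show ?thesis using v Pair by (simp add: step_empty)
  next
    case False
    have m: "Min Y \<in> Y" using v Pair False min_in by blast
    show ?thesis using v m False unfolding Pair
      by (simp add: step_nonempty valid_def Ustep_def) auto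
  qed
qed

lemma valid_iter: "valid n S \<Longrightarrow> valid n ((prop_step n H ^^ j) S)"
  by (induction j) (auto intro: valid_step)

lemma Free_mono: "D \<subseteq> D' \<Longrightarrow> Free n D' \<subseteq> Free n D"
proof
  fix e assume "D \<subseteq> D'" "e \<in> Free n D'"
  then have "e \<subseteq> {..<n}" "2 \<le> card (e - D')" by (auto simp: Free_def possible_edges_def)
  moreover have "finite e" using \<open>e \<subseteq> {..<n}\<close> finite_subset by blast
  moreover have "card (e - D') \<le> card (e - D)" using \<open>D \<subseteq> D'\<close> \<open>finite e\<close>
    by (intro card_mono) auto
  ultimately show "e \<in> Free n D" using \<open>e \<in> Free n D'\<close> by (auto simp: Free_def)
qed

lemma edge2_in:
  assumes "valid n (Y, D)" "v \<in> Y" "u < n" "u \<notin> Y" "u \<notin> D"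
  shows "{v, u} \<in> Free n D - Free n (insert v D)"
proof -
  have vu: "v \<noteq> u" "v \<notin> D" "v < n" using assms by (auto simp: valid_def)
  have "{v,u} - D = {v,u}" using vu assms by auto
  moreover have "{v,u} - insert v D = {u}" using vu assms by auto
  ultimately show ?thesis using vu assms by (auto simp: Free_def possible_edges_def)
qed

lemma edge3_in:
  assumes "valid n (Y, D)" "v \<in> Y" "u < n" "u \<notin> Y" "u \<notin> D" "w \<in> D"
  shows "{v, u, w} \<in> Free n D - Free n (insert v D)"
proof -
  have vu: "v \<noteq> u" "v \<notin> D" "v < n" "w < n" "w \<noteq> v" "w \<noteq> u" using assms by (auto simp: valid_def)
  have "{v,u,w} - D = {v,u}" using vu assms by auto
  moreover have "{v,u,w} - insert v D = {u}" using vu assms by auto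
  moreover have "card {v,u,w} = 3" using vu by auto
  ultimately show ?thesis using vu assms by (auto simp: Free_def possible_edges_def)
qed

lemma step_local:
  assumes "valid n (Y, D)" "Y \<noteq> {}"
    and "\<And>e. e \<in> Free n D - Free n (insert (Min Y) D) \<Longrightarrow> H e = H' e"
  shows "prop_step n H (Y, D) = prop_step n H' (Y, D)"
proof -
  have m: "Min Y \<in> Y" using assms(1,2) by (rule min_in)
  have "Ustep n H Y D = Ustep n H' Y D"
    unfolding Ustep_def using assms(3) edge2_in[OF assms(1) m] edge3_in[OF assms(1) m]
    by auto
  then show ?thesis using assms(2) by (simp add: step_nonempty)
qed

lemma iter_local:
  assumes "valid n S" "\<And>e. e \<in> Free n (snd S) \<Longrightarrow> H e = H' e"
  shows "(prop_step n H ^^ j) S = (prop_step n H' ^^ j) S"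
  using assms
proof (induction j arbitrary: S)
  case 0 then show ?case by simp
next
  case (Suc j)
  obtain Y D where S: "S = (Y, D)" by (cases S)
  have eq: "prop_step n H S = prop_step n H' S"
  proof (cases "Y = {}")
    case True then show ?thesis by (simp add: S step_empty)
  next
    case False then show ?thesis unfolding S
      by (intro step_local) (use Suc.prems S in auto)
  qed
  have sub: "Free n (snd (prop_step n H S)) \<subseteq> Free n (snd S)"
    by (intro Free_mono) (auto simp: S prop_step_def Let_def)
  have "(prop_step n H ^^ j) (prop_step n H S) = (prop_step n H' ^^ j) (prop_step n H S)"
    using Suc.prems sub by (intro Suc.IH valid_step) auto
  then show ?case by (simp only: funpow_Suc_right comp_def eq)
qed




definition pe :: "real \<Rightarrow> real \<Rightarrow> nat set \<Rightarrow> real" where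
  "pe p2 p3 e = (if card e = 2 then p2 else p3)"

definition Pm :: "real \<Rightarrow> real \<Rightarrow> nat set set \<Rightarrow> (nat set \<Rightarrow> bool) pmf" where
  "Pm p2 p3 A = Pi_pmf A False (\<lambda>e. bernoulli_pmf (pe p2 p3 e))"

lemma finite_possible: "finite (possible_edges n)"
  unfolding possible_edges_def by (rule finite_subset[of _ "Pow {..<n}"]) auto

lemma finite_Free: "finite (Free n D)"
  unfolding Free_def using finite_possible by auto

lemma finite_set_Pm: "finite A \<Longrightarrow> finite (set_pmf (Pm p2 p3 A))"
  unfolding Pm_def
  by (rule finite_subset[OF set_Pi_pmf_subset']) (auto intro!: finite_PiE_dflt)

lemma nn_split:
  assumes "finite A" "finite B" "A \<inter> B = {}"
  shows "(\<integral>\<^sup>+H. F H \<partial>Pm p2 p3 (A \<union> B)) =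
         (\<integral>\<^sup>+h1. \<integral>\<^sup>+h2. F (\<lambda>x. if x \<in> A then h1 x else h2 x) \<partial>Pm p2 p3 B \<partial>Pm p2 p3 A)"
  unfolding Pm_def
  by (subst Pi_pmf_union[OF assms]) (simp add: nn_integral_pair_pmf' case_prod_unfold)

lemma prod_if_pow:
  assumes "finite A"
  shows "(\<Prod>e\<in>A. if P e then (c::real) else 1) = c ^ card {e\<in>A. P e}"
proof -
  have "(\<Prod>e\<in>A. if P e then c else 1) = (\<Prod>e\<in>{e\<in>A. P e}. c)"
    using assms by (simp add: prod.inter_filter[symmetric])
  then show ?thesis by simp
qed




definition lamb :: "nat \<Rightarrow> real \<Rightarrow> real \<Rightarrow> nat \<Rightarrow> real" where
  "lamb n p2 p3 t = real n * p2 + real n * real t * p3"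

definition phi :: "nat \<Rightarrow> real \<Rightarrow> real \<Rightarrow> nat \<Rightarrow> real" where
  "phi n p2 p3 t = - ln (lamb n p2 p3 (t - 1))"

definition Pot :: "nat \<Rightarrow> real \<Rightarrow> real \<Rightarrow> nat set \<times> nat set \<Rightarrow> real" where
  "Pot n p2 p3 S = (if fst S = {} then 0 else exp (phi n p2 p3 (card (snd S)) * (real (card (fst S)) - 1)))"

lemma Pot_nonneg: "0 \<le> Pot n p2 p3 S"
  by (simp add: Pot_def)

lemma lamb_mono: "0 \<le> p3 \<Longrightarrow> s \<le> t \<Longrightarrow> lamb n p2 p3 s \<le> lamb n p2 p3 t"
  unfolding lamb_def by (intro add_left_mono mult_right_mono mult_left_mono) auto

context
  fixes n :: nat and p2 p3 :: real and Y D :: "nat set"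
  assumes p2: "0 \<le> p2" "p2 \<le> 1" and p3: "0 \<le> p3" "p3 \<le> 1"
    and val: "valid n (Y, D)" and ne: "Y \<noteq> {}"
begin

definition "vm = Min Y"
definition "Fr = {u \<in> {..<n}. u \<notin> Y \<and> u \<notin> D}"
definition "E2 = (\<lambda>u. {vm, u}) ` Fr"
definition "E3 = (\<lambda>(u, w). {vm, u, w}) ` (Fr \<times> D)"
definition "ES = E2 \<union> E3"
definition "AA = Free n D - Free n (insert vm D)"

lemma v_in: "vm \<in> Y" using min_in[OF val ne] by (simp add: vm_def)

lemma finD: "finite D" and finY: "finite Y" and finFr: "finite Fr"
  using val by (auto simp: valid_def Fr_def intro: finite_subset[OF _ finite_lessThan])

lemma v_notin: "vm \<notin> D" "vm < n" using v_in val by (auto simp: valid_def)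

lemma ES_sub: "ES \<subseteq> AA"
  unfolding ES_def E2_def E3_def AA_def Fr_def
  using edge2_in[OF val v_in] edge3_in[OF val v_in] by auto

lemma finES: "finite ES"
  unfolding ES_def E2_def E3_def using finFr finD by auto

lemma finAA: "finite AA"
  unfolding AA_def using finite_Free by auto

lemma card_E2: "card E2 \<le> n"
proof -
  have "card E2 \<le> card Fr" unfolding E2_def by (rule card_image_le[OF finFr])
  also have "card Fr \<le> card {..<n}" unfolding Fr_def by (rule card_mono) auto
  finally show ?thesis by simp
qed

lemma card_E3: "card E3 \<le> n * card D"
proof -
  have "card E3 \<le> card (Fr \<times> D)" unfolding E3_def by (rule card_image_le) (use finFr finD in auto)
  also have "\<dots> = card Fr * card D" by (simp add: card_cartesian_product)
  also have "card Fr \<le> card {..<n}" unfolding Fr_def by (rule card_mono) auto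
  finally show ?thesis by (simp add: mult_right_mono)
qed

lemma pe_E2: "e \<in> E2 \<Longrightarrow> pe p2 p3 e = p2"
proof -
  assume "e \<in> E2"
  then obtain u where "u \<in> Fr" "e = {vm,u}" unfolding E2_def by auto
  moreover have "vm \<noteq> u" using calculation v_in unfolding Fr_def by auto
  ultimately show ?thesis unfolding pe_def by auto
qed

lemma pe_E3: "e \<in> E3 \<Longrightarrow> pe p2 p3 e = p3"
proof -
  assume "e \<in> E3"
  then obtain u w where "u \<in> Fr" "w \<in> D" "e = {vm,u,w}" unfolding E3_def by auto
  moreover have "vm \<noteq> u" "vm \<noteq> w" "u \<noteq> w" using calculation v_in v_notin unfolding Fr_def by auto
  ultimately show ?thesis unfolding pe_def by auto
qed

lemma E23_disj: "E2 \<inter> E3 = {}"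
proof -
  { fix e assume "e \<in> E2" "e \<in> E3"
    then obtain u where "u \<in> Fr" "e = {vm,u}" unfolding E2_def by auto
    moreover from \<open>e \<in> E3\<close> obtain u' w where "u' \<in> Fr" "w \<in> D" "e = {vm,u',w}" unfolding E3_def by auto
    moreover have "vm \<noteq> u'" "vm \<noteq> w" "u' \<noteq> w" using calculation v_in v_notin unfolding Fr_def by auto
    ultimately have "w \<in> {vm, u}" by blast
    then have False using \<open>w \<in> D\<close> \<open>u \<in> Fr\<close> v_notin unfolding Fr_def by auto }
  then show ?thesis by blast
qed

lemma sum_ES: "(\<Sum>e\<in>ES. pe p2 p3 e) \<le> lamb n p2 p3 (card D)"
proof -
  have "(\<Sum>e\<in>ES. pe p2 p3 e) = (\<Sum>e\<in>E2. pe p2 p3 e) + (\<Sum>e\<in>E3. pe p2 p3 e)"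
    unfolding ES_def using finES E23_disj by (intro sum.union_disjoint) (auto simp: ES_def)
  also have "\<dots> = real (card E2) * p2 + real (card E3) * p3"
    using pe_E2 pe_E3 by simp
  also have "\<dots> \<le> real n * p2 + real (n * card D) * p3"
    using card_E2 card_E3 p2 p3 by (intro add_mono mult_right_mono) (auto simp del: of_nat_mult)
  finally show ?thesis by (simp add: lamb_def)
qed


lemma U_sub: "Ustep n h Y D \<subseteq> (\<lambda>e. the_elem (e - insert vm D)) ` {e\<in>ES. h e}"
proof
  fix u assume u: "u \<in> Ustep n h Y D"
  then have uF: "u \<in> Fr" and hu: "h {vm,u} \<or> (\<exists>w\<in>D. h {vm,u,w})"
    unfolding Ustep_def Fr_def vm_def by auto
  have vu: "vm \<noteq> u" "u \<notin> D" using uF v_in unfolding Fr_def by auto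
  show "u \<in> (\<lambda>e. the_elem (e - insert vm D)) ` {e\<in>ES. h e}"
  proof (cases "h {vm,u}")
    case True
    have "{vm,u} \<in> ES" using uF unfolding ES_def E2_def by auto
    moreover have "{vm,u} - insert vm D = {u}" using vu by auto
    ultimately show ?thesis using True by (intro image_eqI[of _ _ "{vm,u}"]) auto
  next
    case False
    then obtain w where w: "w \<in> D" "h {vm,u,w}" using hu by auto
    have "{vm,u,w} \<in> ES" using uF w unfolding ES_def E3_def by auto
    moreover have "{vm,u,w} - insert vm D = {u}" using vu w by auto
    ultimately show ?thesis using w by (intro image_eqI[of _ _ "{vm,u,w}"]) auto
  qed
qed

lemma U_card: "card (Ustep n h Y D) \<le> card {e\<in>ES. h e}"
proof -
  have "card (Ustep n h Y D) \<le> card ((\<lambda>e. the_elem (e - insert vm D)) ` {e\<in>ES. h e})"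
    by (intro card_mono finite_imageI U_sub) (use finES in auto)
  also have "\<dots> \<le> card {e\<in>ES. h e}" by (rule card_image_le) (use finES in auto)
  finally show ?thesis .
qed

lemma finU: "finite (Ustep n h Y D)"
  unfolding Ustep_def by auto

lemma step_card: "card (fst (prop_step n h (Y, D))) = card Y + card (Ustep n h Y D) - 1"
   "snd (prop_step n h (Y, D)) = insert vm D" "card (snd (prop_step n h (Y, D))) = Suc (card D)"
proof -
  have disj: "Y \<inter> Ustep n h Y D = {}" unfolding Ustep_def by auto
  have "card ((Y \<union> Ustep n h Y D) - {vm}) = card (Y \<union> Ustep n h Y D) - 1"
    using v_in by (simp add: card_Diff_singleton)
  also have "card (Y \<union> Ustep n h Y D) = card Y + card (Ustep n h Y D)"
    using disj finY finU by (simp add: card_Un_disjoint)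
  finally show "card (fst (prop_step n h (Y, D))) = card Y + card (Ustep n h Y D) - 1"
    using ne by (simp add: step_nonempty vm_def)
  show "snd (prop_step n h (Y, D)) = insert vm D" using ne by (simp add: step_nonempty vm_def)
  then show "card (snd (prop_step n h (Y, D))) = Suc (card D)" using finD v_notin by simp
qed

lemma pointwise:
  assumes lp: "0 < lamb n p2 p3 (card D)" and that: "lamb n p2 p3 (card D) \<le> 1"
  shows "Pot n p2 p3 (prop_step n h (Y, D)) \<le>
     exp (- ln (lamb n p2 p3 (card D)) * (real (card Y) - 2)) *
     (\<Prod>e\<in>AA. if e \<in> ES \<and> h e then 1 / lamb n p2 p3 (card D) else 1)"
proof -
  define l where "l = lamb n p2 p3 (card D)"
  define U where "U = Ustep n h Y D"
  have c1: "1 \<le> 1 / l" using lp that by (simp add: l_def)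
  have prodeq: "(\<Prod>e\<in>AA. if e \<in> ES \<and> h e then 1 / l else 1) = (1/l) ^ card {e\<in>ES. h e}"
  proof -
    have "(\<Prod>e\<in>AA. if e \<in> ES \<and> h e then 1 / l else 1) = (1/l) ^ card {e\<in>AA. e \<in> ES \<and> h e}"
      by (rule prod_if_pow[OF finAA])
    also have "{e\<in>AA. e \<in> ES \<and> h e} = {e\<in>ES. h e}" using ES_sub by auto
    finally show ?thesis .
  qed
  have rhs_nn: "0 \<le> exp (- ln l * (real (card Y) - 2)) * (1/l) ^ card {e\<in>ES. h e}"
    using lp by (simp add: l_def)
  show ?thesis
  proof (cases "fst (prop_step n h (Y, D)) = {}")
    case True
    then show ?thesis using rhs_nn[unfolded l_def] prodeq[unfolded l_def] by (simp add: Pot_def)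
  next
    case False
    have cY: "1 \<le> card Y" using ne finY by (simp add: Suc_le_eq card_gt_0_iff)
    have "Pot n p2 p3 (prop_step n h (Y, D)) = exp (- ln l * (real (card Y + card U - 1) - 1))"
      using False step_card[of h] by (simp add: Pot_def phi_def l_def U_def)
    also have "real (card Y + card U - 1) - 1 = (real (card Y) - 2) + real (card U)"
      using cY by (simp add: of_nat_diff)
    also have "exp (- ln l * ((real (card Y) - 2) + real (card U))) =
        exp (- ln l * (real (card Y) - 2)) * (1/l) ^ card U"
    proof -
      have "exp (- ln l * real (card U)) = exp (ln (1/l)) ^ card U"
        using lp by (simp add: exp_of_nat_mult[symmetric] ln_div l_def mult.commute)
      also have "\<dots> = (1/l) ^ card U" using lp by (simp add: l_def)
      finally have X: "exp (- ln l * real (card U)) = (1/l) ^ card U" .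
      show ?thesis unfolding distrib_left exp_add X by (rule refl)
    qed
    also have "\<dots> \<le> exp (- ln l * (real (card Y) - 2)) * (1/l) ^ card {e\<in>ES. h e}"
      using c1 U_card[of h] by (intro mult_left_mono power_increasing) (auto simp: U_def)
    finally show ?thesis using prodeq[unfolded l_def] by (simp add: l_def)
  qed
qed


lemma pe_range: "0 \<le> pe p2 p3 e" "pe p2 p3 e \<le> 1"
  using p2 p3 by (auto simp: pe_def)

lemma one_step:
  assumes l0: "0 < lamb n p2 p3 0" and l1: "lamb n p2 p3 (card D) \<le> 1"
  shows "(\<integral>\<^sup>+h. ennreal (Pot n p2 p3 (prop_step n h (Y, D))) \<partial>Pm p2 p3 AA)
     \<le> ennreal (Pot n p2 p3 (Y, D) * exp (1 - lamb n p2 p3 (card D) + ln (lamb n p2 p3 (card D))))"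
proof -
  define l where "l = lamb n p2 p3 (card D)"
  have lp: "0 < l" using l0 lamb_mono[OF p3(1), of 0 "card D" n p2] by (simp add: l_def)
  define c where "c = 1 / l"
  have c1: "1 \<le> c" using lp l1 by (simp add: c_def l_def)
  define K where "K = exp (- ln l * (real (card Y) - 2))"
  define f where "f = (\<lambda>e x. if e \<in> ES \<and> x then c else (1::real))"
  have fnn: "0 \<le> f e x" for e x using c1 by (simp add: f_def)
  have finb: "finite (set_pmf (bernoulli_pmf q))" for q
    by (rule finite_subset[of _ UNIV]) auto
  have "(\<integral>\<^sup>+h. ennreal (Pot n p2 p3 (prop_step n h (Y, D))) \<partial>Pm p2 p3 AA)
      \<le> (\<integral>\<^sup>+h. ennreal (K * (\<Prod>e\<in>AA. f e (h e))) \<partial>Pm p2 p3 AA)"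
    unfolding K_def f_def c_def l_def
    by (intro nn_integral_mono ennreal_leI pointwise[OF lp[unfolded l_def] l1])
  also have "\<dots> = ennreal (\<integral>h. K * (\<Prod>e\<in>AA. f e (h e)) \<partial>Pm p2 p3 AA)"
    by (intro nn_integral_eq_integral integrable_measure_pmf_finite finite_set_Pm finAA AE_pmfI)
       (auto simp: K_def fnn prod_nonneg)
  also have "(\<integral>h. K * (\<Prod>e\<in>AA. f e (h e)) \<partial>Pm p2 p3 AA) =
      K * (\<Prod>e\<in>AA. \<integral>x. f e x \<partial>bernoulli_pmf (pe p2 p3 e))"
    unfolding Pm_def
    unfolding integral_mult_right_zero
    by (subst expectation_prod_Pi_pmf)
       (auto intro: integrable_measure_pmf_finite finb finAA fnn)
  also have "(\<Prod>e\<in>AA. \<integral>x. f e x \<partial>bernoulli_pmf (pe p2 p3 e)) =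
      (\<Prod>e\<in>AA. 1 + (if e \<in> ES then pe p2 p3 e * (c - 1) else 0))"
    using pe_range by (intro prod.cong refl) (auto simp: f_def algebra_simps)
  also have "\<dots> \<le> (\<Prod>e\<in>AA. exp (if e \<in> ES then pe p2 p3 e * (c - 1) else 0))"
    using c1 pe_range by (intro prod_mono) (auto simp del: exp_ge_add_one_self intro: exp_ge_add_one_self)
  also have "\<dots> = exp (\<Sum>e\<in>AA. if e \<in> ES then pe p2 p3 e * (c - 1) else 0)"
    using finAA by (simp add: exp_sum)
  also have "(\<Sum>e\<in>AA. if e \<in> ES then pe p2 p3 e * (c - 1) else 0) = (\<Sum>e\<in>ES. pe p2 p3 e) * (c - 1)"
    using finAA ES_sub by (simp add: sum.inter_restrict[symmetric] Int_absorb1 sum_distrib_right)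
  also have "\<dots> \<le> l * (c - 1)"
    using sum_ES c1 by (intro mult_right_mono) (auto simp: l_def)
  also have "l * (c - 1) = 1 - l" using lp by (simp add: c_def field_simps)
  finally have A: "(\<integral>\<^sup>+h. ennreal (Pot n p2 p3 (prop_step n h (Y, D))) \<partial>Pm p2 p3 AA)
      \<le> ennreal (K * exp (1 - l))"
    by (simp add: K_def ennreal_leI mult_left_mono)
  have cY: "1 \<le> card Y" using ne finY by (simp add: Suc_le_eq card_gt_0_iff)
  have lm: "0 < lamb n p2 p3 (card D - 1)" using l0 lamb_mono[OF p3(1), of 0 "card D - 1" n p2] by simp
  have "lamb n p2 p3 (card D - 1) \<le> l" unfolding l_def by (rule lamb_mono[OF p3(1)]) simp
  then have ph: "- ln l \<le> phi n p2 p3 (card D)" unfolding phi_def using lm by simp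
  have "K * exp (1 - l) = exp (- ln l * (real (card Y) - 1) + (1 - l + ln l))"
    by (simp add: K_def exp_add[symmetric] algebra_simps)
  also have "\<dots> \<le> exp (phi n p2 p3 (card D) * (real (card Y) - 1) + (1 - l + ln l))"
    using ph cY by (intro exp_mono add_right_mono mult_right_mono) auto
  also have "\<dots> = Pot n p2 p3 (Y, D) * exp (1 - l + ln l)"
    using ne by (simp add: Pot_def exp_add)
  finally show ?thesis using A unfolding l_def
    by (meson ennreal_leI order_trans)
qed

end



lemma iter_empty: "(prop_step n H ^^ j) ({}, D) = ({}, D)"
  by (induction j) (auto simp: step_empty)


lemma main:
  assumes p2: "0 \<le> p2" "p2 \<le> 1" and p3: "0 \<le> p3" "p3 \<le> 1"
    and l0: "0 < lamb n p2 p3 0" and lT: "\<And>t. t < T \<Longrightarrow> lamb n p2 p3 t \<le> 1"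
  shows "valid n S \<Longrightarrow> card (snd S) + j \<le> T \<Longrightarrow>
    (\<integral>\<^sup>+H. ennreal (Pot n p2 p3 ((prop_step n H ^^ j) S)) \<partial>Pm p2 p3 (Free n (snd S)))
    \<le> ennreal (Pot n p2 p3 S * (\<Prod>s\<in>{card (snd S)..<card (snd S) + j}. exp (1 - lamb n p2 p3 s + ln (lamb n p2 p3 s))))"
proof (induction j arbitrary: S)
  case 0
  then show ?case by (simp add: measure_pmf.emeasure_space_1)
next
  case (Suc j)
  obtain Y D where S: "S = (Y, D)" by (cases S)
  define c where "c = (\<lambda>s. exp (1 - lamb n p2 p3 s + ln (lamb n p2 p3 s)))"
  show ?case
  proof (cases "Y = {}")
    case True
    then show ?thesis by (simp add: S iter_empty step_empty Pot_def)
  next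
    case False
    have val: "valid n (Y, D)" using Suc.prems S by simp
    define v where "v = Min Y"
    define A where "A = Free n D - Free n (insert v D)"
    define B where "B = Free n (insert v D)"
    have BF: "B \<subseteq> Free n D" unfolding B_def by (rule Free_mono) auto
    have FAB: "Free n D = A \<union> B" "A \<inter> B = {}" using BF unfolding A_def B_def by auto
    have finA: "finite A" and finB: "finite B" unfolding A_def B_def using finite_Free by auto
    have tT: "card D < T" using Suc.prems S by simp
    let ?m = "\<lambda>h1 h2 x. if x \<in> A then h1 x else h2 x"
    have eq1: "(prop_step n (?m h1 h2) ^^ Suc j) (Y, D) = (prop_step n h2 ^^ j) (prop_step n h1 (Y, D))" for h1 h2
    proof -
      have s1: "prop_step n (?m h1 h2) (Y, D) = prop_step n h1 (Y, D)"
        by (rule step_local[OF val False]) (auto simp: A_def v_def)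
      have sn: "snd (prop_step n h1 (Y, D)) = insert v D"
        using False by (simp add: step_nonempty v_def)
      have "(prop_step n (?m h1 h2) ^^ j) (prop_step n h1 (Y, D)) = (prop_step n h2 ^^ j) (prop_step n h1 (Y, D))"
        by (rule iter_local[OF valid_step[OF val]]) (use FAB in \<open>auto simp: sn B_def\<close>)
      then show ?thesis by (simp only: funpow_Suc_right comp_def s1)
    qed
    have IH: "(\<integral>\<^sup>+h2. ennreal (Pot n p2 p3 ((prop_step n h2 ^^ j) (prop_step n h1 (Y, D)))) \<partial>Pm p2 p3 B)
        \<le> ennreal (Pot n p2 p3 (prop_step n h1 (Y, D)) * (\<Prod>s\<in>{Suc (card D)..<Suc (card D) + j}. c s))" for h1
    proof -
      have sn: "snd (prop_step n h1 (Y, D)) = insert v D"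
        using False by (simp add: step_nonempty v_def)
      have cd: "card (insert v D) = Suc (card D)"
      proof -
        have "finite D" using val by (auto simp: valid_def intro: finite_subset[OF _ finite_lessThan])
        moreover have "v \<notin> D" using val min_in[OF val False] by (auto simp: v_def valid_def)
        ultimately show ?thesis by simp
      qed
      show ?thesis
        using Suc.IH[OF valid_step[OF val], of h1] Suc.prems
        by (simp add: sn cd B_def S c_def)
    qed
    have OS: "(\<integral>\<^sup>+h. ennreal (Pot n p2 p3 (prop_step n h (Y, D))) \<partial>Pm p2 p3 A) \<le> ennreal (Pot n p2 p3 (Y, D) * c (card D))"
    proof -
      have "AA n Y D = A" unfolding AA_def[OF p2 p3 val False] vm_def[OF p2 p3 val False] A_def v_def by simp
      then show ?thesis using one_step[OF p2 p3 val False l0 lT[OF tT]] by (simp add: c_def)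
    qed
    have "(\<integral>\<^sup>+H. ennreal (Pot n p2 p3 ((prop_step n H ^^ Suc j) S)) \<partial>Pm p2 p3 (Free n (snd S)))
       = (\<integral>\<^sup>+h1. \<integral>\<^sup>+h2. ennreal (Pot n p2 p3 ((prop_step n h2 ^^ j) (prop_step n h1 (Y, D)))) \<partial>Pm p2 p3 B \<partial>Pm p2 p3 A)"
      unfolding S snd_conv FAB(1) by (subst nn_split[OF finA finB FAB(2)]) (simp only: eq1)
    also have "\<dots> \<le> (\<integral>\<^sup>+h1. ennreal (Pot n p2 p3 (prop_step n h1 (Y, D))) * ennreal (\<Prod>s\<in>{Suc (card D)..<Suc (card D) + j}. c s) \<partial>Pm p2 p3 A)"
    proof (intro nn_integral_mono order_trans[OF IH] eq_refl)
      fix h1 show "ennreal (Pot n p2 p3 (prop_step n h1 (Y, D)) * (\<Prod>s\<in>{Suc (card D)..<Suc (card D) + j}. c s)) =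
         ennreal (Pot n p2 p3 (prop_step n h1 (Y, D))) * ennreal (\<Prod>s\<in>{Suc (card D)..<Suc (card D) + j}. c s)"
        by (rule ennreal_mult[OF Pot_nonneg]) (simp add: c_def prod_nonneg)
    qed
    also have "\<dots> = (\<integral>\<^sup>+h1. ennreal (Pot n p2 p3 (prop_step n h1 (Y, D))) \<partial>Pm p2 p3 A) * ennreal (\<Prod>s\<in>{Suc (card D)..<Suc (card D) + j}. c s)"
      by (rule nn_integral_multc) simp
    also have "\<dots> \<le> ennreal (Pot n p2 p3 (Y, D) * c (card D)) * ennreal (\<Prod>s\<in>{Suc (card D)..<Suc (card D) + j}. c s)"
      by (intro mult_right_mono OS) auto
    also have "\<dots> = ennreal (Pot n p2 p3 (Y, D) * (c (card D) * (\<Prod>s\<in>{Suc (card D)..<Suc (card D) + j}. c s)))"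
      by (simp add: ennreal_mult[symmetric] Pot_nonneg c_def prod_nonneg mult.assoc)
    also have "c (card D) * (\<Prod>s\<in>{Suc (card D)..<Suc (card D) + j}. c s) = (\<Prod>s\<in>{card D..<card D + Suc j}. c s)"
      by (subst prod.atLeast_Suc_lessThan[of "card D" "card D + Suc j"]) auto
    finally show ?thesis by (simp add: S c_def)
  qed
qed




lemma card_iter: "valid n S \<Longrightarrow> card (snd ((prop_step n H ^^ j) S)) \<le> card (snd S) + j"
proof (induction j)
  case 0 then show ?case by simp
next
  case (Suc j)
  define S' where "S' = (prop_step n H ^^ j) S"
  have v: "valid n S'" using Suc.prems valid_iter S'_def by blast
  obtain Y D where S': "S' = (Y, D)" by (cases S')
  have "card (snd (prop_step n H S')) \<le> Suc (card (snd S'))"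
  proof (cases "Y = {}")
    case True then show ?thesis by (simp add: S' step_empty)
  next
    case False
    have "finite D" using v S' by (auto simp: valid_def intro: finite_subset[OF _ finite_lessThan])
    then show ?thesis using False by (simp add: S' step_nonempty card_insert_if)
  qed
  then show ?case using Suc S'_def by simp
qed

lemma iter_stop: "fst ((prop_step n H ^^ T) S) = {} \<Longrightarrow> T \<le> m \<Longrightarrow>
   (prop_step n H ^^ m) S = (prop_step n H ^^ T) S"
proof -
  assume a: "fst ((prop_step n H ^^ T) S) = {}" "T \<le> m"
  obtain D where d: "(prop_step n H ^^ T) S = ({}, D)" using a(1) by (cases "(prop_step n H ^^ T) S") auto
  have "(prop_step n H ^^ m) S = (prop_step n H ^^ (m - T)) ((prop_step n H ^^ T) S)"
    using a(2) by (metis funpow_add le_add_diff_inverse2 comp_apply)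
  then show ?thesis using d by (simp add: iter_empty)
qed

lemma rh_eq: "random_hypergraph n p2 p3 = Pm p2 p3 (Free n {})"
proof -
  have "Free n {} = possible_edges n" by (auto simp: Free_def possible_edges_def)
  then show ?thesis by (simp add: random_hypergraph_def Pm_def pe_def)
qed

lemma final_bound:
  assumes p2: "0 \<le> p2" "p2 \<le> 1" and p3: "0 \<le> p3" "p3 \<le> 1"
    and l0: "0 < lamb n p2 p3 0" and lT: "\<And>t. t < T \<Longrightarrow> lamb n p2 p3 t \<le> 1"
    and T1: "1 \<le> T" and v0: "v0 < n" and Tx: "real T < x"
  shows "measure_pmf.prob (random_hypergraph n p2 p3) {H. real (card (prop_component n H v0)) \<ge> x}
     \<le> (\<Prod>s<T. exp (1 - lamb n p2 p3 s + ln (lamb n p2 p3 s)))"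
proof -
  define S0 where "S0 = ({v0}, {}::nat set)"
  have val: "valid n S0" using v0 by (simp add: S0_def valid_def)
  define M where "M = random_hypergraph n p2 p3"
  define Ev where "Ev = {H. real (card (prop_component n H v0)) \<ge> x}"
  define bd where "bd = (\<Prod>s<T. exp (1 - lamb n p2 p3 s + ln (lamb n p2 p3 s)))"
  have ind: "indicator Ev H \<le> ennreal (Pot n p2 p3 ((prop_step n H ^^ T) S0))" for H
  proof (cases "H \<in> Ev")
    case False then show ?thesis by simp
  next
    case True
    obtain Y D where YD: "(prop_step n H ^^ T) S0 = (Y, D)" by (cases "(prop_step n H ^^ T) S0")
    have cD: "card D \<le> T" using card_iter[OF val, where H=H and j=T] YD by (simp add: S0_def)
    have Yne: "Y \<noteq> {}"
    proof
      assume "Y = {}"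
      have "card (prop_component n H v0) \<le> T"
      proof (cases "T \<le> n")
        case True
        then show ?thesis using iter_stop[where H=H and T=T and S=S0 and m=n and n=n] YD \<open>Y = {}\<close> cD
          by (simp add: prop_component_def S0_def)
      next
        case False
        then show ?thesis using card_iter[OF val, where H=H and j=n] by (simp add: prop_component_def S0_def)
      qed
      then show False using True Tx by (simp add: Ev_def)
    qed
    have vYD: "valid n (Y, D)" using valid_iter[OF val, where H=H and j=T] YD by simp
    have "1 \<le> card Y" using Yne vYD
      by (auto simp: valid_def Suc_le_eq card_gt_0_iff intro: finite_subset[OF _ finite_lessThan])
    moreover have "0 \<le> phi n p2 p3 (card D)"
    proof -
      have "card D - 1 < T" using cD T1 by linarith
      then have "lamb n p2 p3 (card D - 1) \<le> 1" by (rule lT)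
      moreover have "0 < lamb n p2 p3 (card D - 1)" using l0 lamb_mono[OF p3(1), of 0 "card D - 1" n p2] by simp
      ultimately show ?thesis by (simp add: phi_def)
    qed
    ultimately have "1 \<le> Pot n p2 p3 (Y, D)" using Yne by (simp add: Pot_def)
    then show ?thesis using True YD by simp
  qed
  have "emeasure M Ev = (\<integral>\<^sup>+H. indicator Ev H \<partial>M)" by simp
  also have "\<dots> \<le> (\<integral>\<^sup>+H. ennreal (Pot n p2 p3 ((prop_step n H ^^ T) S0)) \<partial>Pm p2 p3 (Free n (snd S0)))"
    unfolding M_def rh_eq S0_def snd_conv by (intro nn_integral_mono) (rule ind[unfolded S0_def])
  also have "\<dots> \<le> ennreal (Pot n p2 p3 S0 * (\<Prod>s\<in>{card (snd S0)..<card (snd S0) + T}. exp (1 - lamb n p2 p3 s + ln (lamb n p2 p3 s))))"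
    using main[OF p2 p3 l0 lT val, where j=T] by (simp add: S0_def)
  also have "\<dots> = ennreal bd"
    by (simp add: S0_def Pot_def bd_def atLeast0LessThan)
  finally have "ennreal (measure M Ev) \<le> ennreal bd" by (simp add: measure_pmf.emeasure_eq_measure)
  moreover have "0 \<le> bd" by (simp add: bd_def prod_nonneg)
  ultimately show ?thesis unfolding M_def Ev_def bd_def by (simp add: ennreal_le_iff)
qed




definition ff :: "real \<Rightarrow> real \<Rightarrow> real \<Rightarrow> real" where
  "ff \<epsilon> r w = 1 - (1 - \<epsilon> + r * w) + ln (1 - \<epsilon> + r * w)"

definition FF :: "real \<Rightarrow> real \<Rightarrow> real \<Rightarrow> real" where
  "FF \<epsilon> r w = \<epsilon> * w - r * w\<^sup>2 / 2 + ((1 - \<epsilon> + r * w) * ln (1 - \<epsilon> + r * w) - (1 - \<epsilon> + r * w)) / r"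

lemma FF_deriv0: "0 < 1 - (\<epsilon>::real) + r * w \<Longrightarrow> 0 < r \<Longrightarrow>
  (FF \<epsilon> r has_real_derivative (1 - (1 - \<epsilon> + r * w) + ln (1 - \<epsilon> + r * w))) (at w)"
    unfolding FF_def[abs_def]
    by (rule derivative_eq_intros refl | simp)+

context
  fixes \<epsilon> r :: real
  assumes e0: "0 < \<epsilon>" and e1: "\<epsilon> < 1" and r0: "0 < r"
begin

lemma lam_pos: "0 \<le> w \<Longrightarrow> 0 < 1 - \<epsilon> + r * w"
proof -
  assume "0 \<le> w"
  then have "0 \<le> r * w" using r0 by simp
  then show ?thesis using e1 by linarith
qed

lemma FF_deriv: "0 \<le> w \<Longrightarrow> (FF \<epsilon> r has_real_derivative ff \<epsilon> r w) (at w)"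
  unfolding ff_def using FF_deriv0 lam_pos r0 by blast

lemma ff_mono: "0 \<le> a \<Longrightarrow> a \<le> b \<Longrightarrow> b \<le> \<epsilon> / r \<Longrightarrow> ff \<epsilon> r a \<le> ff \<epsilon> r b"
proof -
  assume ab: "0 \<le> a" "a \<le> b" "b \<le> \<epsilon> / r"
  define la lb where "la = 1 - \<epsilon> + r * a" and "lb = 1 - \<epsilon> + r * b"
  have la: "0 < la" and lb: "0 < lb" using lam_pos ab unfolding la_def lb_def by auto
  have lb1: "lb \<le> 1" using ab r0 unfolding lb_def by (simp add: field_simps)
  have "ln (la / lb) \<le> la / lb - 1" using la lb by (intro ln_le_minus_one) simp
  then have "ln la - ln lb \<le> la / lb - 1" using la lb by (simp add: ln_div)
  moreover have "la / lb - 1 = - (r * (b - a)) / lb" using lb by (simp add: field_simps la_def lb_def)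
  moreover have "- (r * (b - a)) / lb \<le> - (r * (b - a))"
  proof -
    have "0 \<le> r * (b - a)" using r0 ab by simp
    then have "r * (b - a) \<le> r * (b - a) / lb" using lb lb1 by (simp add: le_divide_eq mult_left_le)
    then show ?thesis by simp
  qed
  ultimately have "ln la - ln lb \<le> - (r * (b - a))" by linarith
  then show ?thesis unfolding ff_def la_def[symmetric] lb_def[symmetric]
    by (simp add: la_def lb_def algebra_simps)
qed

lemma FF_bounds:
  assumes "0 \<le> a" "a \<le> b" "b \<le> \<epsilon> / r"
  shows "(b - a) * ff \<epsilon> r a \<le> FF \<epsilon> r b - FF \<epsilon> r a"
proof (cases "a = b")
  case True then show ?thesis by simp
next
  case False
  then have ab: "a < b" using assms by simp
  obtain z where z: "a < z" "z < b" "FF \<epsilon> r b - FF \<epsilon> r a = (b - a) * ff \<epsilon> r z"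
  proof -
    have "\<exists>z. a < z \<and> z < b \<and> FF \<epsilon> r b - FF \<epsilon> r a = (b - a) * ff \<epsilon> r z"
      by (rule MVT2[OF ab]) (rule FF_deriv, use assms in linarith)
    then show ?thesis using that by blast
  qed
  have "ff \<epsilon> r a \<le> ff \<epsilon> r z" using z assms by (intro ff_mono) auto
  then show ?thesis using z ab by (simp add: mult_left_mono)
qed

lemma FF_I: "FF \<epsilon> r (\<epsilon> / r) - FF \<epsilon> r 0 = I_er \<epsilon> r"
proof -
  have "1 - \<epsilon> + r * (\<epsilon> / r) = 1" using r0 by simp
  then show ?thesis using r0
    by (simp add: FF_def I_er_def field_simps power2_eq_square)
qed

lemma sum_bound:
  assumes L: "0 < L" and T: "real T \<le> \<epsilon> / r * L" "\<epsilon> / r * L < real T + 1"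
  shows "(\<Sum>s<T. ff \<epsilon> r (real s / L)) \<le> L * I_er \<epsilon> r - ff \<epsilon> r 0"
proof -
  have TL: "real T / L \<le> \<epsilon> / r" using T L by (simp add: divide_le_eq)
  have step: "ff \<epsilon> r (real s / L) \<le> L * (FF \<epsilon> r (real (Suc s) / L) - FF \<epsilon> r (real s / L))" if "s < T" for s
  proof -
    have "real (Suc s) / L \<le> real T / L" using that L by (intro divide_right_mono) auto
    then have "(real (Suc s) / L - real s / L) * ff \<epsilon> r (real s / L) \<le> FF \<epsilon> r (real (Suc s) / L) - FF \<epsilon> r (real s / L)"
      using TL L by (intro FF_bounds) (auto simp: divide_right_mono)
    moreover have "real (Suc s) / L - real s / L = 1 / L" using L by (simp add: field_simps)
    ultimately show ?thesis using L by (simp add: field_simps)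
  qed
  have "(\<Sum>s<T. ff \<epsilon> r (real s / L)) \<le> (\<Sum>s<T. L * (FF \<epsilon> r (real (Suc s) / L) - FF \<epsilon> r (real s / L)))"
    by (intro sum_mono step) auto
  also have "\<dots> = L * (FF \<epsilon> r (real T / L) - FF \<epsilon> r 0)"
  proof -
    have "(\<Sum>s<T. FF \<epsilon> r (real (Suc s) / L) - FF \<epsilon> r (real s / L)) = FF \<epsilon> r (real T / L) - FF \<epsilon> r (real 0 / L)"
      by (rule sum_lessThan_telescope[where f = "\<lambda>s. FF \<epsilon> r (real s / L)"])
    then show ?thesis by (simp only: sum_distrib_left[symmetric]) simp
  qed
  also have "\<dots> \<le> L * I_er \<epsilon> r - ff \<epsilon> r 0"
  proof -
    have d1: "0 \<le> \<epsilon> / r - real T / L" using TL by simp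
    have "(\<epsilon> / r * L - real T) / L \<le> 1 / L" using T L by (intro divide_right_mono) auto
    moreover have "(\<epsilon> / r * L - real T) / L = \<epsilon> / r - real T / L" using L by (simp add: field_simps)
    ultimately have d: "0 \<le> \<epsilon> / r - real T / L" "\<epsilon> / r - real T / L \<le> 1 / L" using d1 by auto
    have "(\<epsilon> / r - real T / L) * ff \<epsilon> r (real T / L) \<le> FF \<epsilon> r (\<epsilon> / r) - FF \<epsilon> r (real T / L)"
      using TL L by (intro FF_bounds) auto
    moreover have "ff \<epsilon> r 0 \<le> ff \<epsilon> r (real T / L)" using TL L by (intro ff_mono) auto
    moreover have f0: "ff \<epsilon> r 0 \<le> 0" using e0 e1 ln_le_minus_one[of "1 - \<epsilon>"] by (simp add: ff_def)
    moreover have "(\<epsilon> / r - real T / L) * ff \<epsilon> r 0 \<le> (\<epsilon> / r - real T / L) * ff \<epsilon> r (real T / L)"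
      by (rule mult_left_mono[OF calculation(2) d(1)])
    moreover have "(1 / L) * ff \<epsilon> r 0 \<le> (\<epsilon> / r - real T / L) * ff \<epsilon> r 0"
      using d(2) f0 by (rule mult_right_mono_neg)
    ultimately have "(1 / L) * ff \<epsilon> r 0 \<le> FF \<epsilon> r (\<epsilon> / r) - FF \<epsilon> r (real T / L)"
      by linarith
    then have "FF \<epsilon> r (real T / L) - FF \<epsilon> r 0 \<le> I_er \<epsilon> r - (1 / L) * ff \<epsilon> r 0"
      using FF_I by linarith
    then have "L * (FF \<epsilon> r (real T / L) - FF \<epsilon> r 0) \<le> L * (I_er \<epsilon> r - (1 / L) * ff \<epsilon> r 0)"
      using L by (intro mult_left_mono) auto
    then show ?thesis using L by (simp add: right_diff_distrib)
  qed
  finally show ?thesis .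
qed

lemma integral_I: "integral {0..\<epsilon>/r} (ff \<epsilon> r) = I_er \<epsilon> r"
proof -
  have "(ff \<epsilon> r has_integral (FF \<epsilon> r (\<epsilon>/r) - FF \<epsilon> r 0)) {0..\<epsilon>/r}"
  proof (rule fundamental_theorem_of_calculus)
    show "0 \<le> \<epsilon> / r" using e0 r0 by simp
    fix x assume "x \<in> {0..\<epsilon>/r}"
    then show "(FF \<epsilon> r has_vector_derivative ff \<epsilon> r x) (at x within {0..\<epsilon>/r})"
      using FF_deriv by (auto simp: has_real_derivative_iff_has_vector_derivative intro: has_vector_derivative_at_within)
  qed
  then show ?thesis using FF_I by (simp add: integral_unique)
qed

end



lemma bound_ev:
  fixes \<epsilon> r K0 :: real
  assumes e0: "0 < \<epsilon>" and e1: "\<epsilon> < 1" and r0: "0 < r" and K0: "\<epsilon> / r < K0"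
  shows "\<forall>\<^sub>F n in sequentially. \<forall>v0<n.
            measure_pmf.prob (random_hypergraph n ((1 - \<epsilon>) / real n) (r / (real n * ln (real n))))
              {H. real (card (prop_component n H v0)) \<ge> K0 * ln (real n)}
            \<le> real n powr (I_er \<epsilon> r + (- ff \<epsilon> r 0) / ln (real n))"
proof -
  have lnlim: "filterlim (\<lambda>n::nat. ln (real n)) at_top sequentially"
    by (rule filterlim_compose[OF ln_at_top filterlim_real_sequentially])
  have ev1: "\<forall>\<^sub>F n in sequentially. max r (r / \<epsilon>) \<le> ln (real n)"
    using lnlim unfolding filterlim_at_top by blast
  have ev2: "\<forall>\<^sub>F n in sequentially. (2::nat) \<le> n" by (rule eventually_ge_at_top)
  show ?thesis using ev1 ev2
  proof eventually_elim
    case (elim n)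
    define L where "L = ln (real n)"
    define p2 where "p2 = (1 - \<epsilon>) / real n"
    define p3 where "p3 = r / (real n * L)"
    have n2: "2 \<le> real n" using elim by simp
    have L0: "0 < L" using n2 by (simp add: L_def)
    have Lr: "r \<le> L" "r / \<epsilon> \<le> L" using elim by (auto simp: L_def)
    define T where "T = nat \<lfloor>\<epsilon> / r * L\<rfloor>"
    have Tle: "real T \<le> \<epsilon> / r * L" and Tgt: "\<epsilon> / r * L < real T + 1"
    proof -
      have "0 \<le> \<epsilon> / r * L" using e0 r0 L0 by simp
      then show "real T \<le> \<epsilon> / r * L" "\<epsilon> / r * L < real T + 1" unfolding T_def by linarith+
    qed
    have T1: "1 \<le> T"
    proof -
      have "1 \<le> \<epsilon> / r * L" using Lr(2) e0 r0 by (simp add: field_simps)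
      then show ?thesis unfolding T_def by linarith
    qed
    have lamb: "lamb n p2 p3 s = 1 - \<epsilon> + r * (real s / L)" for s
      using n2 L0 by (simp add: lamb_def p2_def p3_def field_simps)
    have p2r: "0 \<le> p2" "p2 \<le> 1" using e0 e1 n2 by (auto simp: p2_def field_simps)
    have p3r: "0 \<le> p3" "p3 \<le> 1"
    proof -
      show "0 \<le> p3" using r0 L0 n2 by (simp add: p3_def)
      have "r \<le> real n * L" using Lr(1) L0 n2 by (smt (verit) mult_le_cancel_right1)
      then show "p3 \<le> 1" using r0 L0 n2 by (simp add: p3_def divide_le_eq)
    qed
    have l0: "0 < lamb n p2 p3 0" using lamb[of 0] e1 by simp
    have lT: "lamb n p2 p3 t \<le> 1" if "t < T" for t
    proof -
      have "real t \<le> \<epsilon> / r * L" using that Tle by linarith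
      then have "r * (real t / L) \<le> \<epsilon>" using r0 L0 by (simp add: field_simps)
      then show ?thesis using lamb[of t] by simp
    qed
    have Tx: "real T < K0 * L"
    proof -
      have "\<epsilon> / r * L < K0 * L" using K0 L0 by (rule mult_strict_right_mono)
      then show ?thesis using Tle by linarith
    qed
    have main_bd: "(\<Prod>s<T. exp (1 - lamb n p2 p3 s + ln (lamb n p2 p3 s)))
        \<le> real n powr (I_er \<epsilon> r + (- ff \<epsilon> r 0) / L)"
    proof -
      have "(\<Prod>s<T. exp (1 - lamb n p2 p3 s + ln (lamb n p2 p3 s))) = exp (\<Sum>s<T. ff \<epsilon> r (real s / L))"
        by (simp add: exp_sum lamb ff_def)
      also have "\<dots> \<le> exp (L * I_er \<epsilon> r - ff \<epsilon> r 0)"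
        using sum_bound[OF e0 e1 r0 L0 Tle Tgt] by simp
      also have "\<dots> = real n powr (I_er \<epsilon> r + (- ff \<epsilon> r 0) / L)"
        using n2 L0 by (simp add: powr_def L_def field_simps)
      finally show ?thesis .
    qed
    show ?case
    proof (intro allI impI)
      fix v0 assume "v0 < n"
      from final_bound[OF p2r p3r l0 lT T1 this Tx] main_bd
      show "measure_pmf.prob (random_hypergraph n ((1 - \<epsilon>) / real n) (r / (real n * ln (real n))))
              {H. real (card (prop_component n H v0)) \<ge> K0 * ln (real n)}
            \<le> real n powr (I_er \<epsilon> r + (- ff \<epsilon> r 0) / ln (real n))"
        unfolding p2_def p3_def L_def by linarith
    qed
  qed
qed

theorem proposition1:
  fixes \<epsilon> r :: real
  assumes "0 < \<epsilon>" "\<epsilon> < 1" "0 < r"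
  defines "p2 \<equiv> (\<lambda>n::nat. (1 - \<epsilon>) / real n)"
      and "p3 \<equiv> (\<lambda>n::nat. r / (real n * ln (real n)))"
      and "K0 \<equiv> max 1 (2 * (9 + \<epsilon>) / r)"
      and "lam \<equiv> (\<lambda>x::real. 1 - \<epsilon> + r * x)"
  shows "I_er \<epsilon> r = integral {0..\<epsilon>/r} (\<lambda>\<omega>. 1 - lam \<omega> + ln (lam \<omega>))
    \<and> (\<exists>g :: nat \<Rightarrow> real. (g \<longlonglongrightarrow> 0) \<and>
         (\<forall>\<^sub>F n in sequentially. \<forall>v0<n.
            measure_pmf.prob (random_hypergraph n (p2 n) (p3 n))
              {H. real (card (prop_component n H v0)) \<ge> K0 * ln (real n)}
            \<le> real n powr (I_er \<epsilon> r + g n)))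
    \<and> (I_er \<epsilon> r < -1 \<longrightarrow>
         (\<lambda>n. measure_pmf.prob (random_hypergraph n (p2 n) (p3 n))
              {H. \<exists>v<n. real (card (prop_component n H v)) \<ge> K0 * ln (real n)})
         \<longlonglongrightarrow> 0)"
proof -
  have K0: "\<epsilon> / r < K0"
  proof -
    have "\<epsilon> / r < 2 * (9 + \<epsilon>) / r" using assms by (intro divide_strict_right_mono) auto
    then show ?thesis unfolding K0_def by linarith
  qed
  have P1: "I_er \<epsilon> r = integral {0..\<epsilon>/r} (\<lambda>\<omega>. 1 - lam \<omega> + ln (lam \<omega>))"
  proof -
    have "(\<lambda>\<omega>. 1 - lam \<omega> + ln (lam \<omega>)) = ff \<epsilon> r" unfolding lam_def by (simp add: ff_def fun_eq_iff)
    then show ?thesis using integral_I[OF assms(1-3)] by simp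
  qed
  define g where "g = (\<lambda>n::nat. (- ff \<epsilon> r 0) / ln (real n))"
  have lnlim: "filterlim (\<lambda>n::nat. ln (real n)) at_top sequentially"
    by (rule filterlim_compose[OF ln_at_top filterlim_real_sequentially])
  have g0: "g \<longlonglongrightarrow> 0"
    unfolding g_def by (intro tendsto_divide_0[OF tendsto_const] filterlim_at_top_imp_at_infinity lnlim)
  have P2: "\<forall>\<^sub>F n in sequentially. \<forall>v0<n.
            measure_pmf.prob (random_hypergraph n (p2 n) (p3 n))
              {H. real (card (prop_component n H v0)) \<ge> K0 * ln (real n)}
            \<le> real n powr (I_er \<epsilon> r + g n)"
    using bound_ev[OF assms(1-3) K0] unfolding p2_def p3_def g_def by simp
  have P3: "(\<lambda>n. measure_pmf.prob (random_hypergraph n (p2 n) (p3 n))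
              {H. \<exists>v<n. real (card (prop_component n H v)) \<ge> K0 * ln (real n)})
         \<longlonglongrightarrow> 0" if I1: "I_er \<epsilon> r < -1"
  proof -
    define \<delta> where "\<delta> = - (1 + I_er \<epsilon> r) / 2"
    have d0: "0 < \<delta>" using I1 by (simp add: \<delta>_def)
    have evg: "\<forall>\<^sub>F n in sequentially. g n < \<delta>" using order_tendstoD(2)[OF g0 d0] .
    have ev1: "\<forall>\<^sub>F n in sequentially. (1::nat) \<le> n" by (rule eventually_ge_at_top)
    have up: "\<forall>\<^sub>F n in sequentially. measure_pmf.prob (random_hypergraph n (p2 n) (p3 n))
              {H. \<exists>v<n. real (card (prop_component n H v)) \<ge> K0 * ln (real n)}
           \<le> real n powr (- \<delta>)"
      using P2 evg ev1
    proof eventually_elim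
      case (elim n)
      let ?M = "measure_pmf (random_hypergraph n (p2 n) (p3 n))"
      let ?E = "\<lambda>v. {H. real (card (prop_component n H v)) \<ge> K0 * ln (real n)}"
      have n0: "0 < real n" using elim by simp
      have "{H. \<exists>v<n. real (card (prop_component n H v)) \<ge> K0 * ln (real n)} = (\<Union>v\<in>{..<n}. ?E v)"
        by auto
      then have "measure ?M {H. \<exists>v<n. real (card (prop_component n H v)) \<ge> K0 * ln (real n)}
          \<le> (\<Sum>v\<in>{..<n}. measure ?M (?E v))"
        using measure_UNION_le[of "{..<n}" ?E ?M] by simp
      also have "\<dots> \<le> (\<Sum>v\<in>{..<n}. real n powr (I_er \<epsilon> r + g n))"
        using elim(1) by (intro sum_mono) auto
      also have "\<dots> = real n powr (1 + (I_er \<epsilon> r + g n))"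
        using n0 by (simp add: powr_add)
      also have "\<dots> \<le> real n powr (- \<delta>)"
      proof (rule powr_mono)
        have "g n * 2 < - (1 + I_er \<epsilon> r)" using elim(2) unfolding \<delta>_def by (simp add: field_simps)
        then show "1 + (I_er \<epsilon> r + g n) \<le> - \<delta>" unfolding \<delta>_def by (simp add: field_simps)
        show "1 \<le> real n" using elim by simp
      qed
      finally show ?case .
    qed
    have lim: "(\<lambda>n::nat. real n powr (- \<delta>)) \<longlonglongrightarrow> 0"
      using d0 by (intro tendsto_neg_powr filterlim_real_sequentially) simp
    show ?thesis
      by (rule tendsto_sandwich[OF _ up tendsto_const lim]) simp
  qed
  show ?thesis using P1 P2 P3 g0 by blast
qed


end
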